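(* Let $p\in[1,\infty)$. If $\lim_{|x|\to\infty}\int_{-\infty}^{\infty}G(x,t)\,dt=0$, then $$\lim_{N\to\infty}\ \sup_{\|f\|_p\le1}\int_{|x|\ge N}|(Gf)(x)|^p\,dx=0,$$ the supremum being over $f\in L_p(\mathbb R)$ with $\|f\|_p\le 1$.
   Context: Let $q:\mathbb R\to\mathbb R$ be measurable with $q\in L_1^{\mathrm{loc}}(\mathbb R)$ and $q(x)\ge1$ a.e. A principal fundamental system of solutions (PFSS) of $z''=q(x)z$ is a pair $u,v$ of solutions ($C^1$, derivative locally absolutely continuous, equation a.e.) such that for all $x$: $u>0$, $v>0$, $u'<0$, $v'>0$, $v'u-u'v=1$, $u(x)=v(x)\int_x^\infty v(t)^{-2}dt$, and $u,u'\to0$ as $x\to\infty$, $v,v'\to0$ as $x\to-\infty$, $v,v'\to\infty$ as $x\to\infty$, $u,|u'|\to\infty$ as $x\to-\infty$. Fix a PFSS $\{u,v\}$. The Green function is $G(x,t)=u(x)v(t)$ for $x\ge t$ and $G(x,t)=u(t)v(x)$ for $x\le t$, and $(Gf)(x)=\int_{-\infty}^\infty G(x,t)f(t)\,dt$. *)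

theory Defs
  imports "HOL-Analysis.Analysis"
begin

definition admissible_coeff :: "(real \<Rightarrow> real) \<Rightarrow> bool" where
  "admissible_coeff q \<longleftrightarrow>
     q \<in> borel_measurable borel \<and>
     (\<forall>a b. set_integrable lborel {a..b} q) \<and>
     (AE x in lborel. q x \<ge> 1)"

text \<open>A (Caratheodory) solution of z'' = q z: z is differentiable everywhere and its derivative
  is locally absolutely continuous with derivative q z a.e., i.e. it is the indefinite
  integral of q z on every compact interval.\<close>
definition is_solution :: "(real \<Rightarrow> real) \<Rightarrow> (real \<Rightarrow> real) \<Rightarrow> bool" where
  "is_solution q z \<longleftrightarrow>
     (\<forall>x. z differentiable (at x)) \<and>
     (\<forall>a b. a \<le> b \<longrightarrow>
        set_integrable lborel {a..b} (\<lambda>t. q t * z t) \<and>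
        deriv z b - deriv z a = (LINT t:{a..b}|lborel. q t * z t))"

definition PFSS :: "(real \<Rightarrow> real) \<Rightarrow> (real \<Rightarrow> real) \<Rightarrow> (real \<Rightarrow> real) \<Rightarrow> bool" where
  "PFSS q u v \<longleftrightarrow>
     is_solution q u \<and> is_solution q v \<and>
     (\<forall>x. u x > 0 \<and> v x > 0 \<and> deriv u x < 0 \<and> deriv v x > 0 \<and>
          deriv v x * u x - deriv u x * v x = 1 \<and>
          set_integrable lborel {x..} (\<lambda>t. 1 / (v t)\<^sup>2) \<and>
          u x = v x * (LINT t:{x..}|lborel. 1 / (v t)\<^sup>2)) \<and>
     (u \<longlongrightarrow> 0) at_top \<and> (deriv u \<longlongrightarrow> 0) at_top \<and>
     (v \<longlongrightarrow> 0) at_bot \<and> (deriv v \<longlongrightarrow> 0) at_bot \<and>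
     filterlim v at_top at_top \<and> filterlim (deriv v) at_top at_top \<and>
     filterlim u at_top at_bot \<and> filterlim (\<lambda>x. \<bar>deriv u x\<bar>) at_top at_bot"

definition green :: "(real \<Rightarrow> real) \<Rightarrow> (real \<Rightarrow> real) \<Rightarrow> real \<Rightarrow> real \<Rightarrow> real" where
  "green u v x t = (if t \<le> x then u x * v t else u t * v x)"

definition green_op :: "(real \<Rightarrow> real) \<Rightarrow> (real \<Rightarrow> real) \<Rightarrow> (real \<Rightarrow> real) \<Rightarrow> real \<Rightarrow> real" where
  "green_op u v f x = (LINT t|lborel. green u v x t * f t)"

end

theory Submission
  imports Defs
begin

lemma young_pt:
  fixes p c s :: real
  assumes "p \<ge> 1" "c > 0" "s \<ge> 0"
  shows "s \<le> (1/p) * (c powr (1-p) * s powr p) + (1 - 1/p) * c"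
proof (cases "s = 0")
  case True
  have "0 \<le> 1 - 1/p" using assms by (simp add: field_simps)
  then show ?thesis using True assms by simp
next
  case False
  then have s: "s > 0" using assms by simp
  have "(c powr (1-p) * s powr p) powr (1/p) * c powr (1 - 1/p) \<le> (1/p) * (c powr (1-p) * s powr p) + (1 - 1/p) * c"
    by (rule Youngs_inequality_0) (use assms s in \<open>auto simp: field_simps\<close>)
  moreover have "(c powr (1-p) * s powr p) powr (1/p) * c powr (1 - 1/p) = s"
  proof -
    have "(c powr (1-p) * s powr p) powr (1/p) * c powr (1 - 1/p)
       = c powr ((1-p)/p) * s * c powr (1 - 1/p)"
      using assms s by (simp add: powr_mult powr_powr)
    also have "\<dots> = s * c powr ((1-p)/p + (1 - 1/p))"
      by (simp add: powr_add)
    also have "(1-p)/p + (1 - 1/p) = 0" using assms by (simp add: field_simps)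
    finally show ?thesis using assms by simp
  qed
  ultimately show ?thesis by simp
qed

lemma holder_weight:
  fixes g F :: "'a \<Rightarrow> real" and p :: real
  assumes p: "p \<ge> 1" and ig: "integrable M g" and igF: "integrable M (\<lambda>t. g t * F t)"
    and igFp: "integrable M (\<lambda>t. g t * F t powr p)"
    and g0: "\<And>t. g t \<ge> 0" and F0: "\<And>t. F t \<ge> 0"
  shows "(integral\<^sup>L M (\<lambda>t. g t * F t)) powr p \<le> (integral\<^sup>L M g) powr (p-1) * integral\<^sup>L M (\<lambda>t. g t * F t powr p)"
proof -
  define A where "A = integral\<^sup>L M (\<lambda>t. g t * F t)"
  define H where "H = integral\<^sup>L M g"
  define B where "B = integral\<^sup>L M (\<lambda>t. g t * F t powr p)"
  have A0: "A \<ge> 0" unfolding A_def by (intro integral_nonneg_AE) (auto intro: mult_nonneg_nonneg g0 F0)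
  have H0: "H \<ge> 0" unfolding H_def by (intro integral_nonneg_AE) (auto intro: g0)
  have B0: "B \<ge> 0" unfolding B_def by (intro integral_nonneg_AE) (auto intro!: mult_nonneg_nonneg g0)
  show ?thesis
  proof (cases "A = 0")
    case True
    then show ?thesis using H0 B0 p unfolding A_def[symmetric] H_def[symmetric] B_def[symmetric] by simp
  next
    case False
    then have Ap: "A > 0" using A0 by simp
    have Hp: "H > 0"
    proof (rule ccontr)
      assume "\<not> H > 0"
      then have "H = 0" using H0 by simp
      then have "AE t in M. g t = 0" unfolding H_def
        using integral_nonneg_eq_0_iff_AE[OF ig] g0 by auto
      then have "AE t in M. g t * F t = 0" by eventually_elim simp
      then have "A = 0" unfolding A_def by (simp add: integral_eq_zero_AE)
      then show False using Ap by simp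
    qed
    define c where "c = A / H"
    have c: "c > 0" using Ap Hp by (simp add: c_def)
    have "A \<le> integral\<^sup>L M (\<lambda>t. g t * ((1/p) * (c powr (1-p) * F t powr p) + (1 - 1/p) * c))"
      unfolding A_def
    proof (intro integral_mono igF)
      show "integrable M (\<lambda>t. g t * ((1/p) * (c powr (1-p) * F t powr p) + (1 - 1/p) * c))"
        using igFp ig by (simp add: distrib_left mult.assoc mult.left_commute[of "g _"])
      fix t show "g t * F t \<le> g t * ((1/p) * (c powr (1-p) * F t powr p) + (1 - 1/p) * c)"
        by (intro mult_left_mono young_pt p c F0 g0)
    qed
    also have "\<dots> = (1/p) * c powr (1-p) * B + (1 - 1/p) * c * H"
      unfolding B_def H_def
      using igFp ig
      by (simp add: distrib_left mult.assoc mult.left_commute[of "g _"])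
    also have "(1 - 1/p) * c * H = (1 - 1/p) * A" using Hp by (simp add: c_def)
    finally have "A / p \<le> (1/p) * c powr (1-p) * B" by (simp add: field_simps)
    then have "A \<le> c powr (1-p) * B" using p by (simp add: field_simps)
    then have "A * A powr (p-1) \<le> c powr (1-p) * B * A powr (p-1)"
      by (rule mult_right_mono) simp
    moreover have "A * A powr (p-1) = A powr p" using Ap powr_add[of A 1 "p-1"] by simp
    moreover have "c powr (1-p) * A powr (p-1) = H powr (p-1)"
    proof -
      have e1: "c powr (1-p) = A powr (1-p) / H powr (1-p)"
        using Ap Hp by (simp add: c_def powr_divide)
      have e2: "A powr (1-p) * A powr (p-1) = 1"
        using Ap powr_add[of A "1-p" "p-1", symmetric] by simp
      have e3: "H powr (1-p) * H powr (p-1) = 1"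
        using Hp powr_add[of H "1-p" "p-1", symmetric] by simp
      have "H powr (1-p) > 0" using Hp by simp
      have "c powr (1-p) * A powr (p-1) = (A powr (1-p) * A powr (p-1)) / H powr (1-p)"
        using e1 by simp
      also have "\<dots> = 1 / H powr (1-p)" using e2 by simp
      also have "\<dots> = H powr (p-1)" using e3 \<open>H powr (1-p) > 0\<close>
        by (simp add: field_simps mult.commute)
      finally show ?thesis .
    qed
    ultimately show ?thesis unfolding A_def[symmetric] H_def[symmetric] B_def[symmetric]
      by (simp add: mult.commute mult.left_commute)
  qed
qed

lemma pfss_props:
  assumes "PFSS q u v"
  shows "\<And>x. u x > 0" "\<And>x. v x > 0"
    "\<And>x y. x \<le> y \<Longrightarrow> u y \<le> u x" "\<And>x y. x \<le> y \<Longrightarrow> v x \<le> v y"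
    "u \<in> borel_measurable borel" "v \<in> borel_measurable borel"
proof -
  have du: "\<And>x. u differentiable at x" and dv: "\<And>x. v differentiable at x"
    using assms unfolding PFSS_def is_solution_def by auto
  have p: "\<And>x. u x > 0 \<and> v x > 0 \<and> deriv u x < 0 \<and> deriv v x > 0"
    using assms unfolding PFSS_def by blast
  show "\<And>x. u x > 0" "\<And>x. v x > 0" using p by auto
  show "\<And>x y. x \<le> y \<Longrightarrow> u y \<le> u x"
    by (rule DERIV_nonpos_imp_nonincreasing, assumption)
       (use du p DERIV_deriv_iff_real_differentiable less_imp_le in blast)
  show "\<And>x y. x \<le> y \<Longrightarrow> v x \<le> v y"
    by (rule DERIV_nonneg_imp_nondecreasing, assumption)
       (use dv p DERIV_deriv_iff_real_differentiable less_imp_le in blast)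
  have "continuous_on UNIV u"
    by (intro continuous_at_imp_continuous_on ballI differentiable_imp_continuous_within du)
  then show "u \<in> borel_measurable borel" by (rule borel_measurable_continuous_onI)
  have "continuous_on UNIV v"
    by (intro continuous_at_imp_continuous_on ballI differentiable_imp_continuous_within dv)
  then show "v \<in> borel_measurable borel" by (rule borel_measurable_continuous_onI)
qed

lemma green_eq: "green u v x t = u (max x t) * v (min x t)"
  by (simp add: green_def max_def min_def)

lemma green_sym: "green u v x t = green u v t x"
  by (simp add: green_eq max.commute min.commute)

lemma green_meas:
  assumes "u \<in> borel_measurable borel" "v \<in> borel_measurable borel"
  shows "(\<lambda>z. green u v (fst z) (snd z)) \<in> borel_measurable (lborel \<Otimes>\<^sub>M lborel)"
  unfolding green_eq using assms by measurable


lemma column_bound: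
  assumes PF: "PFSS q u v" and N0: "N \<ge> 0" and d0: "\<delta> > 0"
    and hb: "\<And>s. N \<le> \<bar>s\<bar> \<Longrightarrow> (\<integral>\<^sup>+ t. ennreal (green u v s t) \<partial>lborel) \<le> ennreal \<delta>"
  shows "(\<integral>\<^sup>+ x. ennreal (green u v x t) * indicator {x. N \<le> \<bar>x\<bar>} x \<partial>lborel) \<le> ennreal (2 * \<delta>)"
proof -
  note P = pfss_props[OF PF]
  have gm: "(\<lambda>x. green u v x t) \<in> borel_measurable borel"
    unfolding green_eq using P(5,6) by measurable
  have full: "(\<integral>\<^sup>+ x. ennreal (green u v x t) * indicator A x \<partial>lborel) \<le> ennreal \<delta>"
    if "N \<le> \<bar>t\<bar>" for A
  proof -
    have "(\<integral>\<^sup>+ x. ennreal (green u v x t) * indicator A x \<partial>lborel) \<le> (\<integral>\<^sup>+ x. ennreal (green u v t x) \<partial>lborel)"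
      by (intro nn_integral_mono) (auto simp: green_sym[of u v _ t] split: split_indicator)
    also have "\<dots> \<le> ennreal \<delta>" using hb that by blast
    finally show ?thesis .
  qed
  have right: "(\<integral>\<^sup>+ x. ennreal (green u v x t) * indicator {N..} x \<partial>lborel) \<le> ennreal \<delta>"
  proof (cases "N \<le> t")
    case True then show ?thesis using full by simp
  next
    case False
    have "(\<integral>\<^sup>+ x. ennreal (green u v x t) * indicator {N..} x \<partial>lborel) \<le> (\<integral>\<^sup>+ x. ennreal (green u v N x) \<partial>lborel)"
    proof (intro nn_integral_mono)
      fix x show "ennreal (green u v x t) * indicator {N..} x \<le> ennreal (green u v N x)"
      proof (cases "N \<le> x")
        case True
        then have "green u v x t \<le> green u v N x"
          using False P(1-4)[of x] P(4)[of t N] by (auto simp: green_eq max_def min_def intro!: mult_left_mono)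
        then show ?thesis using True by (simp add: indicator_def ennreal_leI)
      qed (simp add: indicator_def)
    qed
    also have "\<dots> \<le> ennreal \<delta>" using hb N0 by simp
    finally show ?thesis .
  qed
  have left: "(\<integral>\<^sup>+ x. ennreal (green u v x t) * indicator {..-N} x \<partial>lborel) \<le> ennreal \<delta>"
  proof (cases "t \<le> -N")
    case True then show ?thesis using full by simp
  next
    case False
    have "(\<integral>\<^sup>+ x. ennreal (green u v x t) * indicator {..-N} x \<partial>lborel) \<le> (\<integral>\<^sup>+ x. ennreal (green u v (-N) x) \<partial>lborel)"
    proof (intro nn_integral_mono)
      fix x show "ennreal (green u v x t) * indicator {..-N} x \<le> ennreal (green u v (-N) x)"
      proof (cases "x \<le> -N")
        case True
        then have "green u v x t \<le> green u v (-N) x"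
          using False P(1-4)[of x] P(3)[of "-N" t] by (auto simp: green_eq max_def min_def intro!: mult_right_mono)
        then show ?thesis using True by (simp add: indicator_def ennreal_leI)
      qed (simp add: indicator_def)
    qed
    also have "\<dots> \<le> ennreal \<delta>" using hb N0 by simp
    finally show ?thesis .
  qed
  have "(\<integral>\<^sup>+ x. ennreal (green u v x t) * indicator {x. N \<le> \<bar>x\<bar>} x \<partial>lborel)
      \<le> (\<integral>\<^sup>+ x. ennreal (green u v x t) * indicator {N..} x + ennreal (green u v x t) * indicator {..-N} x \<partial>lborel)"
    by (intro nn_integral_mono) (auto simp: indicator_def)
  also have "\<dots> = (\<integral>\<^sup>+ x. ennreal (green u v x t) * indicator {N..} x \<partial>lborel) + (\<integral>\<^sup>+ x. ennreal (green u v x t) * indicator {..-N} x \<partial>lborel)"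
    by (intro nn_integral_add) (use gm in auto)
  also have "\<dots> \<le> ennreal \<delta> + ennreal \<delta>" by (intro add_mono left right)
  also have "\<dots> = ennreal (2 * \<delta>)" using d0 by (simp flip: ennreal_plus)
  finally show ?thesis .
qed


lemma pointwise_bound:
  assumes PF: "PFSS q u v" and p: "p \<ge> 1" and d0: "\<delta> > 0"
    and hx: "(\<integral>\<^sup>+ t. ennreal (green u v x t) \<partial>lborel) \<le> ennreal \<delta>"
    and fm: "f \<in> borel_measurable lborel"
  shows "ennreal (\<bar>green_op u v f x\<bar> powr p) \<le> ennreal (\<delta> powr (p-1)) * (\<integral>\<^sup>+ t. ennreal (green u v x t * \<bar>f t\<bar> powr p) \<partial>lborel)"
proof (cases "(\<integral>\<^sup>+ t. ennreal (green u v x t * \<bar>f t\<bar> powr p) \<partial>lborel) = \<infinity>")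
  case True
  have "ennreal (\<delta> powr (p-1)) \<noteq> 0" using d0 by simp
  then show ?thesis using True by (simp add: ennreal_mult_top)
next
  case False
  note P = pfss_props[OF PF]
  have gpos: "\<And>t. green u v x t > 0" using P(1,2) by (simp add: green_eq)
  have gm: "(\<lambda>t. green u v x t) \<in> borel_measurable lborel"
    unfolding green_eq using P(5,6) by measurable
  have fm': "f \<in> borel_measurable borel" using fm by simp
  have gfpm: "(\<lambda>t. green u v x t * \<bar>f t\<bar> powr p) \<in> borel_measurable lborel"
    using gm fm by measurable
  have gfm: "(\<lambda>t. green u v x t * \<bar>f t\<bar>) \<in> borel_measurable lborel"
    using gm fm by measurable
  have ig: "integrable lborel (\<lambda>t. green u v x t)"
  proof (rule integrableI_bounded[OF gm])
    have "(\<integral>\<^sup>+ t. ennreal (norm (green u v x t)) \<partial>lborel) = (\<integral>\<^sup>+ t. ennreal (green u v x t) \<partial>lborel)"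
      using gpos by (intro nn_integral_cong) (simp add: less_imp_le)
    also have "\<dots> < \<infinity>" using hx by (simp add: le_less_trans)
    finally show "(\<integral>\<^sup>+ t. ennreal (norm (green u v x t)) \<partial>lborel) < \<infinity>" .
  qed
  have igFp: "integrable lborel (\<lambda>t. green u v x t * \<bar>f t\<bar> powr p)"
  proof (rule integrableI_bounded[OF gfpm])
    have "(\<integral>\<^sup>+ t. ennreal (norm (green u v x t * \<bar>f t\<bar> powr p)) \<partial>lborel) = (\<integral>\<^sup>+ t. ennreal (green u v x t * \<bar>f t\<bar> powr p) \<partial>lborel)"
      using gpos by (intro nn_integral_cong) (simp add: less_imp_le abs_mult)
    also have "\<dots> < \<infinity>" using False by (simp add: less_top)
    finally show "(\<integral>\<^sup>+ t. ennreal (norm (green u v x t * \<bar>f t\<bar> powr p)) \<partial>lborel) < \<infinity>" .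
  qed
  have igF: "integrable lborel (\<lambda>t. green u v x t * \<bar>f t\<bar>)"
  proof (rule Bochner_Integration.integrable_bound[OF Bochner_Integration.integrable_add[OF ig igFp] gfm], rule AE_I2)
    fix t
    have "\<bar>f t\<bar> \<le> 1 + \<bar>f t\<bar> powr p"
    proof (cases "\<bar>f t\<bar> \<le> 1")
      case False
      then have "\<bar>f t\<bar> powr 1 \<le> \<bar>f t\<bar> powr p" using p by (intro powr_mono) auto
      then show ?thesis by simp
    qed (smt (verit) powr_ge_zero)
    then have "green u v x t * \<bar>f t\<bar> \<le> green u v x t * (1 + \<bar>f t\<bar> powr p)"
      using gpos[of t] by (intro mult_left_mono) auto
    then show "norm (green u v x t * \<bar>f t\<bar>) \<le> norm (green u v x t + green u v x t * \<bar>f t\<bar> powr p)"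
      using gpos[of t] by (simp add: abs_mult distrib_left)
  qed
  define A where "A = integral\<^sup>L lborel (\<lambda>t. green u v x t * \<bar>f t\<bar>)"
  define H where "H = integral\<^sup>L lborel (\<lambda>t. green u v x t)"
  define B where "B = integral\<^sup>L lborel (\<lambda>t. green u v x t * \<bar>f t\<bar> powr p)"
  have B0: "B \<ge> 0" unfolding B_def using gpos by (intro integral_nonneg_AE AE_I2 mult_nonneg_nonneg) (auto intro: less_imp_le)
  have eH: "(\<integral>\<^sup>+ t. ennreal (green u v x t) \<partial>lborel) = ennreal H"
    unfolding H_def using ig gpos by (intro nn_integral_eq_integral) (auto intro: less_imp_le)
  have eB: "(\<integral>\<^sup>+ t. ennreal (green u v x t * \<bar>f t\<bar> powr p) \<partial>lborel) = ennreal B"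
    unfolding B_def using igFp gpos by (intro nn_integral_eq_integral AE_I2 mult_nonneg_nonneg) (auto intro: less_imp_le)
  have H0: "H \<ge> 0" unfolding H_def using gpos by (intro integral_nonneg_AE) (auto intro: less_imp_le)
  have Hd: "H \<le> \<delta>" using hx eH H0 d0 by (simp add: ennreal_le_iff)
  have "\<bar>green_op u v f x\<bar> \<le> A"
  proof -
    have "\<bar>green_op u v f x\<bar> = norm (integral\<^sup>L lborel (\<lambda>t. green u v x t * f t))"
      by (simp add: green_op_def)
    also have "\<dots> \<le> integral\<^sup>L lborel (\<lambda>t. norm (green u v x t * f t))"
      by (rule integral_norm_bound)
    also have "\<dots> = A" unfolding A_def using gpos
      by (intro Bochner_Integration.integral_cong) (auto simp: abs_mult less_imp_le)
    finally show ?thesis .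
  qed
  then have "\<bar>green_op u v f x\<bar> powr p \<le> A powr p" using p by (intro powr_mono2) auto
  also have "\<dots> \<le> H powr (p-1) * B"
    unfolding A_def H_def B_def
    by (rule holder_weight[OF p ig igF igFp]) (use gpos in \<open>auto intro: less_imp_le\<close>)
  also have "\<dots> \<le> \<delta> powr (p-1) * B"
    using B0 H0 Hd p by (intro mult_right_mono powr_mono2) auto
  finally have "ennreal (\<bar>green_op u v f x\<bar> powr p) \<le> ennreal (\<delta> powr (p-1) * B)"
    by (rule ennreal_leI)
  also have "\<dots> = ennreal (\<delta> powr (p-1)) * ennreal B" using B0 by (simp add: ennreal_mult)
  finally show ?thesis using eB by simp
qed


lemma main_bound:
  assumes PF: "PFSS q u v" and p: "p \<ge> 1" and d0: "\<delta> > 0" and N0: "N \<ge> 0"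
    and hb: "\<And>s. N \<le> \<bar>s\<bar> \<Longrightarrow> (\<integral>\<^sup>+ t. ennreal (green u v s t) \<partial>lborel) \<le> ennreal \<delta>"
    and fm: "f \<in> borel_measurable lborel"
    and fp: "(\<integral>\<^sup>+ t. ennreal (\<bar>f t\<bar> powr p) \<partial>lborel) \<le> 1"
  shows "(\<integral>\<^sup>+ x \<in> {x. \<bar>x\<bar> \<ge> N}. ennreal (\<bar>green_op u v f x\<bar> powr p) \<partial>lborel) \<le> ennreal (2 * \<delta> powr p)"
proof -
  define S where "S = {x::real. \<bar>x\<bar> \<ge> N}"
  have Sm: "S \<in> sets borel" unfolding S_def by measurable
  note P = pfss_props[OF PF]
  have fm': "f \<in> borel_measurable borel" using fm by simp
  define F where "F x t = ennreal (green u v x t * \<bar>f t\<bar> powr p) * indicator S x" for x t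
  have Fm: "(\<lambda>z. F (fst z) (snd z)) \<in> borel_measurable (lborel \<Otimes>\<^sub>M lborel)"
    unfolding F_def green_eq using P(5,6) fm' Sm by measurable
  have Fm1: "\<And>x. F x \<in> borel_measurable lborel"
    unfolding F_def green_eq using P(5,6) fm' Sm by measurable
  have Fm2: "\<And>t. (\<lambda>x. F x t) \<in> borel_measurable lborel"
    unfolding F_def green_eq using P(5,6) fm' Sm by measurable
  have "(\<integral>\<^sup>+ x \<in> S. ennreal (\<bar>green_op u v f x\<bar> powr p) \<partial>lborel)
      \<le> (\<integral>\<^sup>+ x. ennreal (\<delta> powr (p-1)) * (\<integral>\<^sup>+ t. F x t \<partial>lborel) \<partial>lborel)"
  proof (intro nn_integral_mono)
    fix x
    show "ennreal (\<bar>green_op u v f x\<bar> powr p) * indicator S x \<le> ennreal (\<delta> powr (p-1)) * (\<integral>\<^sup>+ t. F x t \<partial>lborel)"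
    proof (cases "x \<in> S")
      case True
      then have "ennreal (\<bar>green_op u v f x\<bar> powr p) \<le> ennreal (\<delta> powr (p-1)) * (\<integral>\<^sup>+ t. ennreal (green u v x t * \<bar>f t\<bar> powr p) \<partial>lborel)"
        by (intro pointwise_bound[OF PF p d0 _ fm] hb) (simp add: S_def)
      then show ?thesis using True by (simp add: F_def)
    qed simp
  qed
  also have "\<dots> = ennreal (\<delta> powr (p-1)) * (\<integral>\<^sup>+ x. (\<integral>\<^sup>+ t. F x t \<partial>lborel) \<partial>lborel)"
    by (intro nn_integral_cmult lborel.borel_measurable_nn_integral) (use Fm in \<open>simp add: split_beta'\<close>)
  also have "(\<integral>\<^sup>+ x. (\<integral>\<^sup>+ t. F x t \<partial>lborel) \<partial>lborel) = (\<integral>\<^sup>+ t. (\<integral>\<^sup>+ x. F x t \<partial>lborel) \<partial>lborel)"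
    by (rule lborel_pair.Fubini'[symmetric]) (use Fm in \<open>simp add: split_beta'\<close>)
  also have "\<dots> = (\<integral>\<^sup>+ t. ennreal (\<bar>f t\<bar> powr p) * (\<integral>\<^sup>+ x. ennreal (green u v x t) * indicator S x \<partial>lborel) \<partial>lborel)"
  proof (intro nn_integral_cong)
    fix t
    have "(\<integral>\<^sup>+ x. F x t \<partial>lborel) = (\<integral>\<^sup>+ x. ennreal (\<bar>f t\<bar> powr p) * (ennreal (green u v x t) * indicator S x) \<partial>lborel)"
    proof (intro nn_integral_cong)
      fix x
      have g0: "green u v x t \<ge> 0" using P(1,2)[of _] by (simp add: green_eq less_imp_le)
      have "ennreal (green u v x t * \<bar>f t\<bar> powr p) = ennreal (\<bar>f t\<bar> powr p) * ennreal (green u v x t)"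
        using ennreal_mult[OF powr_ge_zero[of "\<bar>f t\<bar>" p] g0] by (simp add: mult.commute)
      then show "F x t = ennreal (\<bar>f t\<bar> powr p) * (ennreal (green u v x t) * indicator S x)"
        unfolding F_def by (simp add: mult.assoc)
    qed
    also have "\<dots> = ennreal (\<bar>f t\<bar> powr p) * (\<integral>\<^sup>+ x. ennreal (green u v x t) * indicator S x \<partial>lborel)"
      by (rule nn_integral_cmult) (unfold green_eq, use P(5,6) Sm in measurable)
    finally show "(\<integral>\<^sup>+ x. F x t \<partial>lborel) = ennreal (\<bar>f t\<bar> powr p) * (\<integral>\<^sup>+ x. ennreal (green u v x t) * indicator S x \<partial>lborel)" .
  qed
  also have "\<dots> \<le> (\<integral>\<^sup>+ t. ennreal (\<bar>f t\<bar> powr p) * ennreal (2 * \<delta>) \<partial>lborel)"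
    by (intro nn_integral_mono mult_left_mono) (auto simp: S_def intro: column_bound[OF PF N0 d0 hb])
  also have "\<dots> = (\<integral>\<^sup>+ t. ennreal (\<bar>f t\<bar> powr p) \<partial>lborel) * ennreal (2 * \<delta>)"
    by (rule nn_integral_multc) (use fm' in measurable)
  also have "\<dots> \<le> 1 * ennreal (2 * \<delta>)"
    by (intro mult_right_mono fp) simp
  finally have "(\<integral>\<^sup>+ x \<in> S. ennreal (\<bar>green_op u v f x\<bar> powr p) \<partial>lborel) \<le> ennreal (\<delta> powr (p-1)) * ennreal (2 * \<delta>)"
    by (simp add: mult_left_mono)
  also have "\<dots> = ennreal (2 * \<delta> powr p)"
  proof -
    have "\<delta> powr (p-1) * (2 * \<delta>) = 2 * \<delta> powr p"
      using d0 powr_add[of \<delta> "p-1" 1] by simp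
    then show ?thesis using d0 by (simp flip: ennreal_mult)
  qed
  finally show ?thesis unfolding S_def .
qed


theorem lemma5p4:
  fixes q u v :: "real \<Rightarrow> real" and p :: real
  assumes "admissible_coeff q"
    and "PFSS q u v"
    and "p \<ge> 1"
    and "((\<lambda>x. \<integral>\<^sup>+ t. ennreal (green u v x t) \<partial>lborel) \<longlongrightarrow> 0) at_infinity"
  shows "((\<lambda>N::real. SUP f \<in> {f. f \<in> borel_measurable lborel \<and>
                          (\<integral>\<^sup>+ t. ennreal (\<bar>f t\<bar> powr p) \<partial>lborel) \<le> 1}.
             \<integral>\<^sup>+ x \<in> {x. \<bar>x\<bar> \<ge> N}. ennreal (\<bar>green_op u v f x\<bar> powr p) \<partial>lborel)
          \<longlongrightarrow> 0) at_top"
proof (rule order_tendstoI)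
  fix a :: ennreal assume "a < 0" then show "eventually (\<lambda>N. a < (SUP f \<in> {f. f \<in> borel_measurable lborel \<and>
                          (\<integral>\<^sup>+ t. ennreal (\<bar>f t\<bar> powr p) \<partial>lborel) \<le> 1}.
             \<integral>\<^sup>+ x \<in> {x. \<bar>x\<bar> \<ge> N}. ennreal (\<bar>green_op u v f x\<bar> powr p) \<partial>lborel)) at_top" by simp
next
  fix a :: ennreal assume a0: "0 < a"
  obtain b where b: "0 < b" "b < a" using dense[OF a0] by blast
  define e where "e = enn2real b"
  have bt: "b < top" using b(2) top_greatest by (rule less_le_trans)
  have e0: "e > 0" unfolding e_def enn2real_positive_iff using b(1) bt by blast
  have be: "b = ennreal e" unfolding e_def using bt by simp
  define \<delta> where "\<delta> = (e/4) powr (1/p)"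
  have d0: "\<delta> > 0" using e0 by (simp add: \<delta>_def)
  have dp: "\<delta> powr p = e/4" using e0 assms(3) by (simp add: \<delta>_def powr_powr)
  have "eventually (\<lambda>x. (\<integral>\<^sup>+ t. ennreal (green u v x t) \<partial>lborel) < ennreal \<delta>) at_infinity"
    using order_tendstoD(2)[OF assms(4)] d0 by simp
  then obtain R where R: "\<And>x::real. R \<le> norm x \<Longrightarrow> (\<integral>\<^sup>+ t. ennreal (green u v x t) \<partial>lborel) < ennreal \<delta>"
    unfolding eventually_at_infinity by blast
  show "eventually (\<lambda>N. (SUP f \<in> {f. f \<in> borel_measurable lborel \<and>
                          (\<integral>\<^sup>+ t. ennreal (\<bar>f t\<bar> powr p) \<partial>lborel) \<le> 1}.
             \<integral>\<^sup>+ x \<in> {x. \<bar>x\<bar> \<ge> N}. ennreal (\<bar>green_op u v f x\<bar> powr p) \<partial>lborel) < a) at_top"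
    unfolding eventually_at_top_linorder
  proof (intro exI[of _ "max R 0"] allI impI)
    fix N :: real assume N: "N \<ge> max R 0"
    have hb: "\<And>s. N \<le> \<bar>s\<bar> \<Longrightarrow> (\<integral>\<^sup>+ t. ennreal (green u v s t) \<partial>lborel) \<le> ennreal \<delta>"
      using R N by (intro less_imp_le) auto
    have "(SUP f \<in> {f. f \<in> borel_measurable lborel \<and>
                          (\<integral>\<^sup>+ t. ennreal (\<bar>f t\<bar> powr p) \<partial>lborel) \<le> 1}.
             \<integral>\<^sup>+ x \<in> {x. \<bar>x\<bar> \<ge> N}. ennreal (\<bar>green_op u v f x\<bar> powr p) \<partial>lborel) \<le> ennreal (2 * \<delta> powr p)"
      using main_bound[OF assms(2) assms(3) d0 _ hb] N by (intro SUP_least) auto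
    also have "\<dots> < b" using e0 by (simp add: dp be ennreal_lessI)
    finally show "(SUP f \<in> {f. f \<in> borel_measurable lborel \<and>
                          (\<integral>\<^sup>+ t. ennreal (\<bar>f t\<bar> powr p) \<partial>lborel) \<le> 1}.
             \<integral>\<^sup>+ x \<in> {x. \<bar>x\<bar> \<ge> N}. ennreal (\<bar>green_op u v f x\<bar> powr p) \<partial>lborel) < a"
      using b(2) by (rule less_trans)
  qed
qed

end
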